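(* For every finite simple graph $G$, $\mathrm{SEDF}^0(G)\subseteq \mathrm{SEDF}(G)$.
   Context: For a simple graph $G$ and $f:E(G)\to\{1,-1\}$, write $f(v)=\sum_{e\in E_G(v)}f(e)$ for $v\in V(G)$, where $E_G(v)$ is the set of edges incident with $v$. $\mathrm{SEDF}(G)$ is the set of functions $f:E(G)\to\{1,-1\}$ with $\sum_{e'\in N[e]}f(e')\ge1$ for every edge $e=uv$, where $N[e]=E_G(u)\cup E_G(v)$. $\mathrm{SEDF}^0(G)$ is the set of functions $f:E(G)\to\{1,-1\}$ such that (a) $f(v)\ge 0$ for all $v\in V(G)$, and (b) $f(u)+f(v)\ge 2$ for every edge $e=uv$ with $f(e)=1$. *)

theory Defs
  imports Main
begin

definition simple_graph :: "'a set \<Rightarrow> 'a set set \<Rightarrow> bool" where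
  "simple_graph V E \<longleftrightarrow> finite V \<and> (\<forall>e\<in>E. e \<subseteq> V \<and> card e = 2)"

definition inc_edges :: "'a set set \<Rightarrow> 'a \<Rightarrow> 'a set set" where
  "inc_edges E v = {e\<in>E. v \<in> e}"

definition vsum :: "'a set set \<Rightarrow> ('a set \<Rightarrow> int) \<Rightarrow> 'a \<Rightarrow> int" where
  "vsum E f v = (\<Sum>e\<in>inc_edges E v. f e)"

text \<open>Functions E(G) -> {1,-1} (values outside E fixed to 0 so they are determined by E).\<close>
definition sign_funs :: "'a set set \<Rightarrow> ('a set \<Rightarrow> int) set" where
  "sign_funs E = {f. (\<forall>e\<in>E. f e = 1 \<or> f e = -1) \<and> (\<forall>e. e \<notin> E \<longrightarrow> f e = 0)}"

definition SEDF :: "'a set \<Rightarrow> 'a set set \<Rightarrow> ('a set \<Rightarrow> int) set" where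
  "SEDF V E = {f \<in> sign_funs E.
     \<forall>u v. {u, v} \<in> E \<longrightarrow> (\<Sum>e'\<in>inc_edges E u \<union> inc_edges E v. f e') \<ge> 1}"

definition SEDF0 :: "'a set \<Rightarrow> 'a set set \<Rightarrow> ('a set \<Rightarrow> int) set" where
  "SEDF0 V E = {f \<in> sign_funs E.
     (\<forall>v\<in>V. vsum E f v \<ge> 0) \<and>
     (\<forall>u v. {u, v} \<in> E \<longrightarrow> f {u, v} = 1 \<longrightarrow> vsum E f u + vsum E f v \<ge> 2)}"

end

theory Submission
  imports Defs
begin

theorem lemma2p1:
  fixes V :: "'a set" and E :: "'a set set"
  assumes "simple_graph V E"
  shows "SEDF0 V E \<subseteq> SEDF V E"
proof
  fix f assume f: "f \<in> SEDF0 V E"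
  have fin: "finite V" and ed: "\<And>e. e \<in> E \<Longrightarrow> e \<subseteq> V \<and> card e = 2"
    using assms by (auto simp: simple_graph_def)
  have finE: "finite E"
    proof -
    have "E \<subseteq> Pow V" using ed by blast
    thus ?thesis using fin by (meson finite_Pow_iff rev_finite_subset)
  qed
  have sf: "f \<in> sign_funs E" using f by (simp add: SEDF0_def)
  have "\<forall>u v. {u, v} \<in> E \<longrightarrow> (\<Sum>e'\<in>inc_edges E u \<union> inc_edges E v. f e') \<ge> 1"
  proof (intro allI impI)
    fix u v assume uv: "{u, v} \<in> E"
    have "card {u, v} = 2" using ed[OF uv] by simp
    hence ne: "u \<noteq> v" by (cases "u = v") auto
    have inV: "u \<in> V" "v \<in> V" using ed[OF uv] by auto
    have int: "inc_edges E u \<inter> inc_edges E v = {{u, v}}"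
    proof
      show "inc_edges E u \<inter> inc_edges E v \<subseteq> {{u, v}}"
      proof
        fix e assume e: "e \<in> inc_edges E u \<inter> inc_edges E v"
        hence eE: "e \<in> E" and "u \<in> e" "v \<in> e" by (auto simp: inc_edges_def)
        hence sub: "{u, v} \<subseteq> e" by auto
        have "finite e" "card e = 2" using ed[OF eE] card.infinite by fastforce+
        hence "e = {u, v}" using sub ne
          using \<open>card {u, v} = 2\<close> card_subset_eq by metis
        thus "e \<in> {{u, v}}" by simp
      qed
    next
      show "{{u, v}} \<subseteq> inc_edges E u \<inter> inc_edges E v" using uv by (auto simp: inc_edges_def)
    qed
    have fu: "finite (inc_edges E u)" "finite (inc_edges E v)"
      using finE by (auto simp: inc_edges_def)
    have "(\<Sum>e'\<in>inc_edges E u \<union> inc_edges E v. f e') = vsum E f u + vsum E f v - f {u, v}"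
      using sum_Un[OF fu, of f] int by (simp add: vsum_def)
    moreover have "vsum E f u \<ge> 0" "vsum E f v \<ge> 0"
      using f inV by (auto simp: SEDF0_def)
    moreover have "f {u, v} = 1 \<longrightarrow> vsum E f u + vsum E f v \<ge> 2"
      using f uv by (auto simp: SEDF0_def)
    moreover have "f {u, v} = 1 \<or> f {u, v} = -1" using sf uv by (auto simp: sign_funs_def)
    ultimately show "(\<Sum>e'\<in>inc_edges E u \<union> inc_edges E v. f e') \<ge> 1" by auto
  qed
  thus "f \<in> SEDF V E" using sf by (simp add: SEDF_def)
qed

end
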